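(* If the Noperthedron $\mathcal{N}$ has Rupert's property, then there exist $\theta_1,\theta_2\in[0,2\pi/15]$, $\varphi_1\in[0,\pi]$, $\varphi_2\in[0,\pi/2]$ and $\alpha\in[-\pi/2,\pi/2]$ such that $R(\alpha)M(\theta_1,\varphi_1)\mathcal{N}\subset\operatorname{int}\operatorname{conv}(M(\theta_2,\varphi_2)\mathcal{N})$.
   Context: $R(\alpha)=\begin{pmatrix}\cos\alpha&-\sin\alpha\\ \sin\alpha&\cos\alpha\end{pmatrix}$, $M(\theta,\varphi)=\begin{pmatrix}-\sin\theta&\cos\theta&0\\ -\cos\theta\cos\varphi&-\sin\theta\cos\varphi&\sin\varphi\end{pmatrix}$, acting elementwise on point sets. A pointsymmetric polyhedron $\mathcal{P}$ has Rupert's property if there exist $\theta_1,\theta_2\in[0,2\pi)$, $\varphi_1,\varphi_2\in[0,\pi]$, $\alpha\in[-\pi,\pi)$ with $R(\alpha)M(\theta_1,\varphi_1)\mathcal{P}\subset\operatorname{int}\operatorname{conv}(M(\theta_2,\varphi_2)\mathcal{P})$. Let $R_z(\beta)=\begin{pmatrix}\cos\beta&-\sin\beta&0\\ \sin\beta&\cos\beta&0\\0&0&1\end{pmatrix}$, $\mathcal{C}_{30}=\{(-1)^\ell R_z(2\pi k/15): k=0,\dots,14,\ \ell=0,1\}$, $C_1=\frac{1}{259375205}(152024884,0,210152163)^t$, $C_2=10^{-10}(6632738028,6106948881,3980949609)^t$, $C_3=10^{-10}(8193990033,5298215096,1230614493)^t$; the Noperthedron is $\mathcal{N}=\mathcal{C}_{30}C_1\cup\mathcal{C}_{30}C_2\cup\mathcal{C}_{30}C_3$.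 *)

theory Defs
  imports "HOL-Analysis.Analysis"
begin

definition Rmat :: "real \<Rightarrow> real^2^2" where
  "Rmat \<alpha> = vector [vector [cos \<alpha>, - sin \<alpha>], vector [sin \<alpha>, cos \<alpha>]]"

definition Mmat :: "real \<Rightarrow> real \<Rightarrow> real^3^2" where
  "Mmat \<theta> \<phi> = vector [vector [- sin \<theta>, cos \<theta>, 0],
                        vector [- cos \<theta> * cos \<phi>, - sin \<theta> * cos \<phi>, sin \<phi>]]"

definition Rz :: "real \<Rightarrow> real^3^3" where
  "Rz \<beta> = vector [vector [cos \<beta>, - sin \<beta>, 0], vector [sin \<beta>, cos \<beta>, 0], vector [0, 0, 1]]"

definition C30 :: "(real^3^3) set" where
  "C30 = {((-1::real) ^ l) *\<^sub>R Rz (2 * pi * real k / 15) | k l. k \<le> (14::nat) \<and> l \<le> (1::nat)}"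

definition NC1 :: "real^3" where
  "NC1 = (1 / 259375205) *\<^sub>R vector [152024884, 0, 210152163]"
definition NC2 :: "real^3" where
  "NC2 = (1 / 10^10) *\<^sub>R vector [6632738028, 6106948881, 3980949609]"
definition NC3 :: "real^3" where
  "NC3 = (1 / 10^10) *\<^sub>R vector [8193990033, 5298215096, 1230614493]"

definition Noperthedron :: "(real^3) set" where
  "Noperthedron = (\<lambda>A. A *v NC1) ` C30 \<union> (\<lambda>A. A *v NC2) ` C30 \<union> (\<lambda>A. A *v NC3) ` C30"

text \<open>Rupert's property for a (point symmetric) polyhedron given by a point set P.\<close>
definition rupert :: "(real^3) set \<Rightarrow> bool" where
  "rupert P \<longleftrightarrow> (\<exists>\<theta>1 \<theta>2 \<phi>1 \<phi>2 \<alpha>.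
      \<theta>1 \<in> {0..<2*pi} \<and> \<theta>2 \<in> {0..<2*pi} \<and> \<phi>1 \<in> {0..pi} \<and> \<phi>2 \<in> {0..pi} \<and> \<alpha> \<in> {-pi..<pi} \<and>
      (\<lambda>p. Rmat \<alpha> *v (Mmat \<theta>1 \<phi>1 *v p)) ` P
        \<subseteq> interior (convex hull ((\<lambda>p. Mmat \<theta>2 \<phi>2 *v p) ` P)))"

end

theory Submission
  imports Defs
begin

lemma M_Rz: "Mmat t f *v (Rz b *v p) = Mmat (t - b) f *v p"
  by (simp add: vec_eq_iff forall_2 matrix_vector_mult_def sum_3 Mmat_def Rz_def cos_diff sin_diff algebra_simps)

lemma Rz_mult: "Rz a ** Rz b = Rz (a + b)"
  by (simp add: vec_eq_iff forall_3 matrix_matrix_mult_def sum_3 Rz_def cos_add sin_add algebra_simps)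

definition Dm :: "real^2^2" where "Dm = vector [vector [-1, 0], vector [0, 1]]"

lemma D_M: "Dm *v (Mmat t f *v p) = Mmat (t - pi) (pi - f) *v p"
  by (simp add: vec_eq_iff forall_2 matrix_vector_mult_def sum_3 sum_2 Mmat_def Dm_def cos_diff sin_diff algebra_simps)

lemma D_R: "Dm *v (Rmat a *v v) = Rmat (-a) *v (Dm *v v)"
  by (simp add: vec_eq_iff forall_2 matrix_vector_mult_def sum_2 Rmat_def Dm_def algebra_simps)

lemma D_D: "Dm *v (Dm *v v) = v"
  by (simp add: vec_eq_iff forall_2 matrix_vector_mult_def sum_2 Dm_def)

lemma R_pi: "Rmat (a + pi) *v v = - (Rmat a *v v)"
  by (simp add: vec_eq_iff forall_2 matrix_vector_mult_def sum_2 Rmat_def algebra_simps)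

lemma Rz_per: "Rz (a + 2*pi* of_int q) = Rz a"
proof -
  have c: "cos (a + 2*pi* of_int q) = cos a" "sin (a + 2*pi* of_int q) = sin a"
    by (simp_all add: cos_add sin_add)
  show ?thesis unfolding Rz_def c ..
qed

lemma Rz_scale: "Rz g ** (c *\<^sub>R B) = c *\<^sub>R (Rz g ** B)"
  by (simp add: vec_eq_iff matrix_matrix_mult_def sum_distrib_left algebra_simps scaleR_sum_right)

lemma C30_Rz:
  assumes "A \<in> C30" shows "Rz (2*pi* of_int m/15) ** A \<in> C30"
proof -
  obtain k l where A: "A = ((-1::real) ^ l) *\<^sub>R Rz (2 * pi * real k / 15)" "k \<le> (14::nat)" "l \<le> (1::nat)"
    using assms unfolding C30_def by blast
  define r where "r = (m + int k) mod 15"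
  define q where "q = (m + int k) div 15"
  have r: "0 \<le> r" "r < 15" unfolding r_def by auto
  have mk: "m + int k = 15 * q + r" unfolding r_def q_def by simp
  have "2*pi* of_int m/15 + 2 * pi * real k / 15 = 2*pi* of_int (m + int k)/15"
    by (simp add: field_simps)
  also have "\<dots> = 2*pi*real (nat r)/15 + 2*pi* of_int q"
    using r by (simp add: mk field_simps)
  finally have e: "Rz (2*pi* of_int m/15 + 2 * pi * real k / 15) = Rz (2*pi*real (nat r)/15)"
    by (simp add: Rz_per)
  have "Rz (2*pi* of_int m/15) ** A = ((-1::real) ^ l) *\<^sub>R Rz (2*pi*real (nat r)/15)"
    unfolding A(1) Rz_scale Rz_mult e ..
  moreover have "nat r \<le> 14" using r by auto
  ultimately show ?thesis unfolding C30_def using A(3) by blast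
qed

lemma C30_neg:
  assumes "A \<in> C30" shows "(-1::real) *\<^sub>R A \<in> C30"
proof -
  obtain k l where A: "A = ((-1::real) ^ l) *\<^sub>R Rz (2 * pi * real k / 15)" "k \<le> (14::nat)" "l \<le> (1::nat)"
    using assms unfolding C30_def by blast
  have "(-1::real) *\<^sub>R A = ((-1::real) ^ (1 - l)) *\<^sub>R Rz (2 * pi * real k / 15)"
    using A(3) by (cases l) (auto simp: A(1))
  then show ?thesis unfolding C30_def using A by fastforce
qed

lemma C30_neg': "A \<in> C30 \<Longrightarrow> - A \<in> C30"
  using C30_neg[of A] by simp

lemma N_Rz: assumes "p \<in> Noperthedron" shows "Rz (2*pi* of_int m/15) *v p \<in> Noperthedron"
  using assms unfolding Noperthedron_def
  by (auto simp: matrix_vector_mul_assoc intro!: imageI C30_Rz)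

lemma neg_mv: "- (A *v (p::real^3)) = ((-1::real) *\<^sub>R A) *v p"
  by (simp add: vec_eq_iff matrix_vector_mult_def sum_negf)

lemma N_neg: assumes "p \<in> Noperthedron" shows "- p \<in> Noperthedron"
  using assms unfolding Noperthedron_def
  by (auto simp: neg_mv intro!: imageI C30_neg')

definition good where
  "good a t1 f1 t2 f2 \<longleftrightarrow> (\<lambda>p. Rmat a *v (Mmat t1 f1 *v p)) ` Noperthedron
        \<subseteq> interior (convex hull ((\<lambda>p. Mmat t2 f2 *v p) ` Noperthedron))"

lemma mv_neg: "(A::real^'n^'m) *v (- x) = - (A *v x)"
  by (simp add: vec_eq_iff matrix_vector_mult_def sum_negf)

lemma good_t1:
  assumes "good a t1 f1 t2 f2" shows "good a (t1 - 2*pi* of_int m/15) f1 t2 f2"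
  using assms unfolding good_def
proof (clarsimp)
  fix p assume S: "(\<lambda>p. Rmat a *v (Mmat t1 f1 *v p)) ` Noperthedron
        \<subseteq> interior (convex hull ((\<lambda>p. Mmat t2 f2 *v p) ` Noperthedron))" and p: "p \<in> Noperthedron"
  have "Mmat (t1 - 2*pi* of_int m/15) f1 *v p = Mmat t1 f1 *v (Rz (2*pi* of_int m/15) *v p)"
    by (simp add: M_Rz)
  then show "Rmat a *v (Mmat (t1 - 2*pi* of_int m/15) f1 *v p)
        \<in> interior (convex hull ((\<lambda>p. Mmat t2 f2 *v p) ` Noperthedron))"
    using S N_Rz[OF p, of m] by auto
qed

lemma good_t2:
  assumes "good a t1 f1 t2 f2" shows "good a t1 f1 (t2 - 2*pi* of_int m/15) f2"
proof -
  have "(\<lambda>p. Mmat t2 f2 *v p) ` Noperthedron \<subseteq> (\<lambda>p. Mmat (t2 - 2*pi* of_int m/15) f2 *v p) ` Noperthedron"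
  proof
    fix x assume "x \<in> (\<lambda>p. Mmat t2 f2 *v p) ` Noperthedron"
    then obtain p where p: "p \<in> Noperthedron" "x = Mmat t2 f2 *v p" by auto
    have "x = Mmat (t2 - 2*pi* of_int m/15) f2 *v (Rz (2*pi* of_int (-m)/15) *v p)"
      by (simp add: M_Rz p(2))
    then show "x \<in> (\<lambda>p. Mmat (t2 - 2*pi* of_int m/15) f2 *v p) ` Noperthedron"
      using N_Rz[OF p(1), of "-m"] by blast
  qed
  then show ?thesis using assms unfolding good_def
    by (meson hull_mono interior_mono order_trans)
qed

lemma good_api:
  assumes "good a t1 f1 t2 f2" shows "good (a + pi) t1 f1 t2 f2"
  using assms unfolding good_def
proof (clarsimp)
  fix p assume S: "(\<lambda>p. Rmat a *v (Mmat t1 f1 *v p)) ` Noperthedron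
        \<subseteq> interior (convex hull ((\<lambda>p. Mmat t2 f2 *v p) ` Noperthedron))" and p: "p \<in> Noperthedron"
  have "Rmat (a + pi) *v (Mmat t1 f1 *v p) = Rmat a *v (Mmat t1 f1 *v (-p))"
    by (simp add: R_pi mv_neg)
  then show "Rmat (a + pi) *v (Mmat t1 f1 *v p) \<in> interior (convex hull ((\<lambda>p. Mmat t2 f2 *v p) ` Noperthedron))"
    using S N_neg[OF p] by auto
qed

lemma good_ami:
  assumes "good a t1 f1 t2 f2" shows "good (a - pi) t1 f1 t2 f2"
proof -
  have "good (a + pi) t1 f1 t2 f2" by (rule good_api[OF assms])
  have e: "\<And>v. Rmat (a - pi) *v v = Rmat (a + pi) *v v"
    using R_pi[of "a - pi"] R_pi[of a] by simp
  show ?thesis using \<open>good (a + pi) t1 f1 t2 f2\<close> unfolding good_def e .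
qed

lemma D_inj: "inj (\<lambda>v. Dm *v v)"
  by (metis D_D injI)

lemma D_interior: "(\<lambda>v. Dm *v v) ` interior S \<subseteq> interior ((\<lambda>v. Dm *v v) ` S)"
proof -
  let ?D = "\<lambda>v. Dm *v v"
  have DD: "?D ` ?D ` T = T" for T by (force simp: image_image D_D)
  have "interior (?D ` (?D ` S)) \<subseteq> ?D ` interior (?D ` S)"
    by (rule interior_image_subset[OF D_inj]) (simp add: linear_continuous_at)
  then have "interior S \<subseteq> ?D ` interior (?D ` S)" unfolding DD .
  then have "?D ` interior S \<subseteq> ?D ` ?D ` interior (?D ` S)" by (rule image_mono)
  then show ?thesis unfolding DD .
qed

lemma good_flip:
  assumes "good a t1 f1 t2 f2" shows "good (-a) (t1 - pi) (pi - f1) (t2 - pi) (pi - f2)"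
proof -
  let ?D = "\<lambda>v. Dm *v v"
  have img: "(\<lambda>p. Mmat (t2 - pi) (pi - f2) *v p) ` Noperthedron = ?D ` (\<lambda>p. Mmat t2 f2 *v p) ` Noperthedron"
    by (simp add: image_image D_M)
  have ch: "convex hull (?D ` X) = ?D ` (convex hull X)" for X
    by (rule convex_hull_linear_image[symmetric]) simp
  show ?thesis unfolding good_def
  proof
    fix x assume "x \<in> (\<lambda>p. Rmat (- a) *v (Mmat (t1 - pi) (pi - f1) *v p)) ` Noperthedron"
    then obtain p where p: "p \<in> Noperthedron" "x = Rmat (- a) *v (Mmat (t1 - pi) (pi - f1) *v p)" by auto
    have "x = ?D (Rmat a *v (Mmat t1 f1 *v p))"
      by (simp add: p(2) D_R D_M)
    moreover have "Rmat a *v (Mmat t1 f1 *v p) \<in> interior (convex hull ((\<lambda>p. Mmat t2 f2 *v p) ` Noperthedron))"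
      using assms p(1) unfolding good_def by auto
    ultimately have "x \<in> ?D ` interior (convex hull ((\<lambda>p. Mmat t2 f2 *v p) ` Noperthedron))" by blast
    then show "x \<in> interior (convex hull ((\<lambda>p. Mmat (t2 - pi) (pi - f2) *v p) ` Noperthedron))"
      unfolding img ch using D_interior by blast
  qed
qed

lemma reduce_t:
  fixes t :: real
  obtains m :: int where "t - 2*pi* of_int m/15 \<in> {0..2*pi/15}"
proof -
  define m where "m = \<lfloor>t / (2*pi/15)\<rfloor>"
  have "of_int m \<le> t / (2*pi/15)" "t / (2*pi/15) < of_int m + 1" unfolding m_def by linarith+
  then have "2*pi* of_int m/15 \<le> t" "t < 2*pi* of_int m/15 + 2*pi/15"
    using pi_gt_zero by (simp_all add: field_simps)
  then show ?thesis using that[of m] by auto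
qed

theorem corollary2p4:
  assumes "rupert Noperthedron"
  shows "\<exists>\<theta>1 \<theta>2 \<phi>1 \<phi>2 \<alpha>.
      \<theta>1 \<in> {0..2*pi/15} \<and> \<theta>2 \<in> {0..2*pi/15} \<and> \<phi>1 \<in> {0..pi} \<and> \<phi>2 \<in> {0..pi/2} \<and>
      \<alpha> \<in> {-pi/2..pi/2} \<and>
      (\<lambda>p. Rmat \<alpha> *v (Mmat \<theta>1 \<phi>1 *v p)) ` Noperthedron
        \<subseteq> interior (convex hull ((\<lambda>p. Mmat \<theta>2 \<phi>2 *v p) ` Noperthedron))"
proof -
  obtain t1 t2 f1 f2 a where r: "f1 \<in> {0..pi}" "f2 \<in> {0..pi}" "a \<in> {-pi..<pi}" "good a t1 f1 t2 f2"
    using assms unfolding rupert_def good_def by blast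
  obtain t1' t2' f1' f2' a' where s: "f1' \<in> {0..pi}" "f2' \<in> {0..pi/2}" "a' \<in> {-pi..pi}" "good a' t1' f1' t2' f2'"
  proof (cases "f2 \<le> pi/2")
    case True then show ?thesis using that[OF _ _ _ r(4)] r by auto
  next
    case False then show ?thesis using that[OF _ _ _ good_flip[OF r(4)]] r by auto
  qed
  obtain a'' where s2: "a'' \<in> {-pi/2..pi/2}" "good a'' t1' f1' t2' f2'"
  proof (cases "a' > pi/2")
    case True then show ?thesis using that[OF _ good_ami[OF s(4)]] s by auto
  next
    case F1: False
    show ?thesis
    proof (cases "a' < -pi/2")
      case True then show ?thesis using that[OF _ good_api[OF s(4)]] s by auto
    next
      case False then show ?thesis using that[OF _ s(4)] F1 by auto
    qed
  qed
  obtain m1 :: int where m1: "t1' - 2*pi* of_int m1/15 \<in> {0..2*pi/15}" by (rule reduce_t)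
  obtain m2 :: int where m2: "t2' - 2*pi* of_int m2/15 \<in> {0..2*pi/15}" by (rule reduce_t)
  have "good a'' (t1' - 2*pi* of_int m1/15) f1' (t2' - 2*pi* of_int m2/15) f2'"
    by (rule good_t2[OF good_t1[OF s2(2)]])
  then show ?thesis unfolding good_def
    apply (rule_tac x="t1' - 2*pi* of_int m1/15" in exI)
    apply (rule_tac x="t2' - 2*pi* of_int m2/15" in exI)
    apply (rule_tac x="f1'" in exI)
    apply (rule_tac x="f2'" in exI)
    apply (rule_tac x="a''" in exI)
    using m1 m2 s(1,2) s2(1) by (intro conjI) assumption+
qed

end
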